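(* Let $h$ and $k$ be relatively prime integers with $k>0$ and $h+k$ odd. Then $$B_{1}(h,k)=\frac{2(1-h)}{\pi}\sum_{n=1}^{\infty}\frac{1}{2n-1}\tan\left(\frac{\pi h(2n-1)}{2k}\right).$$
   Context: $[x]$ denotes the greatest integer $\le x$. For integers $h,k$ with $k>0$ and $\gcd(h,k)=1$, $$B_{1}(h,k)=\sum_{j=1}^{k-1}(-1)^{j+\left[\frac{hj}{k}\right]}\left[\frac{hj}{k}\right].$$ *)

theory Defs
  imports Complex_Main
begin

definition B1 :: "int \<Rightarrow> int \<Rightarrow> int" where
  "B1 h k = (\<Sum>j\<in>{1..k-1}.
      (let q = \<lfloor>real_of_int (h * j) / real_of_int k\<rfloor>
       in (if even (j + q) then 1 else -1) * q))"

end

theory Submission imports Defs begin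
lemma cos_sum_id: "2 * sin x * (\<Sum>n<N. cos ((2 * real n + 1) * x)) = sin (2 * real N * x)"
proof (induction N)
  case 0 then show ?case by simp
next
  case (Suc N)
  have e: "sin (2 * real (Suc N) * x) = sin ((2 * real N + 1) * x + x)" 
    "sin (2 * real N * x) = sin ((2 * real N + 1) * x - x)" by (simp_all add: algebra_simps)
  have "2 * sin x * (\<Sum>n<Suc N. cos ((2 * real n + 1) * x)) = sin (2 * real N * x) + 2 * sin x * cos ((2 * real N + 1) * x)"
    using Suc by (simp add: distrib_left)
  also have "\<dots> = sin (2 * real (Suc N) * x)" unfolding e sin_add sin_diff by simp
  finally show ?case .
qed

lemma derS: "((\<lambda>x. \<Sum>n<N. sin ((2 * real n + 1) * x) / (2 * real n + 1)) has_real_derivative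
   (\<Sum>n<N. cos ((2 * real n + 1) * x))) (at x)"
proof -
  have "((\<lambda>x. \<Sum>n<N. sin ((2 * real n + 1) * x) / (2 * real n + 1)) has_real_derivative
   (\<Sum>n<N. cos ((2 * real n + 1) * x) * (2 * real n + 1) / (2 * real n + 1))) (at x)"
    by (auto intro!: derivative_eq_intros)
  moreover have "(\<Sum>n<N. cos ((2 * real n + 1) * x) * (2 * real n + 1) / (2 * real n + 1)) = (\<Sum>n<N. cos ((2 * real n + 1) * x))"
    by (intro sum.cong) (auto simp: field_simps)
  ultimately show ?thesis by simp
qed

definition SS :: "nat \<Rightarrow> real \<Rightarrow> real" where
  "SS N x = (\<Sum>n<N. sin ((2 * real n + 1) * x) / (2 * real n + 1))"

definition PP :: "nat \<Rightarrow> real \<Rightarrow> real" where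
  "PP N x = SS N x + cos (2 * real N * x) / (4 * real N * sin x)"

lemma derP:
  assumes "sin x \<noteq> 0" "N > 0"
  shows "(PP N has_real_derivative (- cos (2 * real N * x) * cos x / (4 * real N * (sin x)^2))) (at x)"
proof -
  have d1: "(SS N has_real_derivative sin (2 * real N * x) / (2 * sin x)) (at x)"
  proof -
    have "(\<Sum>n<N. cos ((2 * real n + 1) * x)) = sin (2 * real N * x) / (2 * sin x)"
      using cos_sum_id[of x N] assms by (simp add: field_simps)
    then show ?thesis using derS[of N x] unfolding SS_def[abs_def] by simp
  qed
  show ?thesis
    unfolding PP_def[abs_def]
    apply (rule derivative_eq_intros d1 | simp)+
      apply (simp add: assms)
     apply (rule refl)
    using assms by (simp add: field_simps power2_eq_square)
qed

lemma mvt_bound: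
  fixes f :: "real \<Rightarrow> real"
  assumes "a \<le> b" "\<And>x. a \<le> x \<Longrightarrow> x \<le> b \<Longrightarrow> (f has_real_derivative f' x) (at x)"
    "\<And>x. a \<le> x \<Longrightarrow> x \<le> b \<Longrightarrow> \<bar>f' x\<bar> \<le> M"
  shows "\<bar>f b - f a\<bar> \<le> M * (b - a)"
proof (cases "a = b")
  case True then show ?thesis by simp
next
  case False
  then have "a < b" using assms by simp
  from MVT2[OF this assms(2)] obtain z where z: "a < z" "z < b" "f b - f a = (b - a) * f' z" by blast
  have "\<bar>f b - f a\<bar> = (b - a) * \<bar>f' z\<bar>" using z \<open>a<b\<close> by (simp add: abs_mult)
  also have "\<dots> \<le> (b - a) * M" using assms(3)[of z] z \<open>a<b\<close> by (intro mult_left_mono) auto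
  finally show ?thesis by (simp add: mult.commute)
qed

lemma singe:
  assumes "0 < t" "t < pi" "min t (pi/2) \<le> x" "x \<le> max t (pi/2)"
  shows "sin t \<le> sin x"
proof (cases "t \<le> pi/2")
  case True
  then show ?thesis using assms by (intro sin_monotone_2pi_le) auto
next
  case False
  have "sin t = sin (pi - t)" by simp
  also have "\<dots> \<le> sin (pi - x)" using assms False by (intro sin_monotone_2pi_le) auto
  finally show ?thesis by simp
qed

lemma PP_bound:
  assumes "0 < t" "t < pi" "N > 0"
  shows "\<bar>PP N t - PP N (pi/2)\<bar> \<le> \<bar>t - pi/2\<bar> / (4 * real N * (sin t)^2)"
proof -
  define a where "a = min t (pi/2)"
  define b where "b = max t (pi/2)"
  have st: "sin t > 0" using assms by (simp add: sin_gt_zero)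
  have sx: "sin x \<ge> sin t" if "a \<le> x" "x \<le> b" for x using singe[OF assms(1,2)] that a_def b_def by auto
  have der: "(PP N has_real_derivative (- cos (2 * real N * x) * cos x / (4 * real N * (sin x)^2))) (at x)"
    if "a \<le> x" "x \<le> b" for x using derP[of x N] sx[OF that] st assms by auto
  have bd: "\<bar>- cos (2 * real N * x) * cos x / (4 * real N * (sin x)^2)\<bar> \<le> 1 / (4 * real N * (sin t)^2)"
    if "a \<le> x" "x \<le> b" for x
  proof -
    have s: "sin t ^ 2 \<le> sin x ^ 2" using sx[OF that] st by (intro power_mono) auto
    have "\<bar>- cos (2 * real N * x) * cos x / (4 * real N * (sin x)^2)\<bar> =
       \<bar>cos (2 * real N * x)\<bar> * \<bar>cos x\<bar> / (4 * real N * (sin x)^2)" by (simp add: abs_mult)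
    also have "\<dots> \<le> 1 / (4 * real N * (sin x)^2)"
      using sx[OF that] st assms
      by (intro divide_right_mono) (auto intro!: mult_le_one)
    also have "\<dots> \<le> 1 / (4 * real N * (sin t)^2)"
      using s st assms by (intro divide_left_mono mult_left_mono mult_pos_pos) auto
    finally show ?thesis .
  qed
  have "a \<le> b" by (simp add: a_def b_def)
  from mvt_bound[OF this der bd] have "\<bar>PP N b - PP N a\<bar> \<le> 1 / (4 * real N * (sin t)^2) * (b - a)" .
  moreover have "b - a = \<bar>t - pi/2\<bar>" by (simp add: a_def b_def)
  moreover have "\<bar>PP N t - PP N (pi/2)\<bar> = \<bar>PP N b - PP N a\<bar>" by (auto simp: a_def b_def abs_minus_commute max_def min_def)
  ultimately show ?thesis by simp
qed

lemma leibniz_sums: "(\<lambda>n. (-1)^n / (2 * real n + 1)) sums (pi/4)"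
proof -
  have "summable (\<lambda> k. (-1)^k * (1 / real (k*2+1) * (1::real) ^ (k*2+1)))"
    by (rule summable_arctan_series) simp
  then have "(\<lambda>k. (-1)^k * 1 / real (k * 2 + 1)) sums (\<Sum>k. (-1)^k * 1 / real (k * 2 + 1))"
    by (simp add: summable_sums)
  then show ?thesis unfolding pi_series[symmetric] by (simp add: mult.commute add.commute)
qed

lemma SS_half: "SS N (pi/2) = (\<Sum>n<N. (-1)^n / (2 * real n + 1))"
proof -
  have "sin ((2 * real n + 1) * (pi/2)) = (-1)^n" for n
    using sin_cos_npi[of n] by (simp add: mult.commute add.commute)
  then show ?thesis unfolding SS_def by simp
qed

lemma sq_wave:
  assumes "0 < t" "t < pi"
  shows "(\<lambda>n. sin ((2 * real n + 1) * t) / (2 * real n + 1)) sums (pi/4)"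
proof -
  have st: "sin t > 0" using assms by (simp add: sin_gt_zero)
  define C where "C = \<bar>t - pi/2\<bar> / (4 * (sin t)^2) + 1 / (4 * sin t) + 1/4"
  have bound: "\<bar>SS N t - SS N (pi/2)\<bar> \<le> (1 / real N) * C" if "N > 0" for N
  proof -
    have e: "SS N t - SS N (pi/2) = (PP N t - PP N (pi/2)) - cos (2 * real N * t) / (4 * real N * sin t)
       + cos (2 * real N * (pi/2)) / (4 * real N * sin (pi/2))"
      unfolding PP_def by simp
    have b1: "\<bar>PP N t - PP N (pi/2)\<bar> \<le> \<bar>t - pi/2\<bar> / (4 * real N * (sin t)^2)"
      by (rule PP_bound[OF assms that])
    have b2: "\<bar>cos (2 * real N * t) / (4 * real N * sin t)\<bar> \<le> 1 / (4 * real N * sin t)"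
      using st that by (auto simp add: abs_div intro!: divide_right_mono)
    have b3: "\<bar>cos (2 * real N * (pi/2)) / (4 * real N * sin (pi/2))\<bar> \<le> 1 / (4 * real N)"
      using that by (simp add: abs_div)
    have "\<bar>SS N t - SS N (pi/2)\<bar> \<le> \<bar>t - pi/2\<bar> / (4 * real N * (sin t)^2) + 1 / (4 * real N * sin t) + 1 / (4 * real N)"
      unfolding e using b1 b2 b3 by linarith
    also have "\<dots> = (1 / real N) * C" unfolding C_def using that st by (simp add: field_simps)
    finally show ?thesis .
  qed
  have "(\<lambda>N. SS N t - SS N (pi/2)) \<longlonglongrightarrow> 0"
  proof (rule tendsto_0_le[where K = C])
    show "(\<lambda>N. 1 / real N) \<longlonglongrightarrow> 0" by (rule lim_const_over_n)
    show "\<forall>\<^sub>F N in sequentially. norm (SS N t - SS N (pi/2)) \<le> norm (1 / real N) * C"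
      using eventually_gt_at_top[of "0::nat"] by eventually_elim (use bound in auto)
  qed
  moreover have "(\<lambda>N. SS N (pi/2)) \<longlonglongrightarrow> pi/4"
    using leibniz_sums unfolding sums_def SS_half .
  ultimately have "(\<lambda>N. (SS N t - SS N (pi/2)) + SS N (pi/2)) \<longlonglongrightarrow> 0 + pi/4"
    by (rule tendsto_add)
  then show ?thesis unfolding sums_def SS_def by simp
qed

definition sg :: "int \<Rightarrow> real" where "sg m = (if even m then 1 else -1)"

lemma cos_int_pi: "cos (of_int m * pi) = sg m"
proof -
  have "cos (of_int m * pi) = cos (real (nat \<bar>m\<bar>) * pi)"
  proof (cases "m \<ge> 0")
    case True then show ?thesis by simp
  next
    case False
    then have "of_int m * pi = - (real (nat \<bar>m\<bar>) * pi)" by simp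
    then show ?thesis by (simp only: cos_minus)
  qed
  also have "\<dots> = (-1) ^ nat \<bar>m\<bar>" by (rule cos_npi)
  also have "\<dots> = sg m" unfolding sg_def by (simp add: even_nat_iff)
  finally show ?thesis .
qed

lemma sin_int_pi: "sin (of_int m * pi) = 0"
  using sin_zero_iff_int2 by blast

lemma sin_add_int_pi: "sin (y + of_int m * pi) = sg m * sin y"
  by (simp add: sin_add cos_int_pi sin_int_pi)

lemma sg_mult_odd: "odd a \<Longrightarrow> sg (a * m) = sg m"
  unfolding sg_def by auto

lemma sq_wave_gen:
  fixes a k :: int
  assumes "k > 0" "\<not> k dvd a"
  shows "(\<lambda>n. sin ((2 * real n + 1) * (pi * of_int a / of_int k)) / (2 * real n + 1)) sums (pi/4 * sg (a div k))"
proof -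
  define q r where "q = a div k" and "r = a mod k"
  have a: "a = k * q + r" unfolding q_def r_def by simp
  have r0: "0 < r" using assms unfolding r_def
    by (metis dvd_eq_mod_eq_0 le_less pos_mod_sign)
  have r1: "r < k" using assms unfolding r_def by simp
  define t where "t = pi * of_int r / of_int k"
  have t: "0 < t" "t < pi" using r0 r1 assms unfolding t_def by (auto simp: field_simps)
  have e: "sin ((2 * real n + 1) * (pi * of_int a / of_int k)) = sg q * sin ((2 * real n + 1) * t)" for n
  proof -
    have "(2 * real n + 1) * (pi * of_int a / of_int k) = (2 * real n + 1) * t + of_int ((2 * int n + 1) * q) * pi"
      unfolding t_def a using assms by (simp add: field_simps)
    then have "sin ((2 * real n + 1) * (pi * of_int a / of_int k)) = sg ((2 * int n + 1) * q) * sin ((2 * real n + 1) * t)"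
      by (simp only: sin_add_int_pi)
    then show ?thesis by (simp add: sg_mult_odd)
  qed
  show ?thesis unfolding e q_def[symmetric]
    using sums_mult[OF sq_wave[OF t], of "sg q"] by (simp add: mult.commute mult.left_commute)
qed

lemma tan_tel: "2 * cos x * (\<Sum>j\<in>{1..N}. sg (int j + 1) * sin (2 * real j * x)) = sin x - sg (int N) * sin ((2 * real N + 1) * x)"
proof (induction N)
  case 0 then show ?case by (simp add: sg_def)
next
  case (Suc N)
  have sgs: "sg (int (Suc N) + 1) = sg (int N)" "sg (int (Suc N)) = - sg (int N)" "sg (2 + int N) = sg (int N)" by (auto simp: sg_def)
  have e1: "sin ((2 * real (Suc N) + 1) * x) = sin (2 * real (Suc N) * x + x)"
     "sin ((2 * real N + 1) * x) = sin (2 * real (Suc N) * x - x)" by (simp_all add: algebra_simps)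
  have "2 * cos x * (\<Sum>j\<in>{1..Suc N}. sg (int j + 1) * sin (2 * real j * x)) =
      (sin x - sg (int N) * sin ((2 * real N + 1) * x)) + 2 * cos x * sg (int N) * sin (2 * real (Suc N) * x)"
    using Suc by (simp add: distrib_left sgs)
  also have "\<dots> = sin x - sg (int (Suc N)) * sin ((2 * real (Suc N) + 1) * x)"
    unfolding sgs e1 sin_add sin_diff by (simp add: algebra_simps)
  finally show ?case .
qed

lemma sum_int_nat: "(\<Sum>j\<in>{1..int N}. f j) = (\<Sum>j\<in>{1..N}. f (int j))"
proof (induction N)
  case 0 then show ?case by simp
next
  case (Suc N)
  have "{1..int (Suc N)} = insert (int N + 1) {1..int N}" by auto
  then show ?case using Suc by (simp add: add.commute)
qed

lemma tan_exp:
  fixes h k :: int and n :: nat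
  assumes "k > 0" "odd (h + k)"
  shows "tan (pi * real_of_int h * (2 * real n + 1) / (2 * real_of_int k)) =
     (\<Sum>j\<in>{1..k-1}. sg (j + 1) * sin ((2 * real n + 1) * (pi * of_int (j * h) / of_int k)))"
proof -
  define x where "x = pi * real_of_int h * (2 * real n + 1) / (2 * real_of_int k)"
  define N where "N = nat (k - 1)"
  have kN: "k - 1 = int N" using assms unfolding N_def by simp
  have cx: "cos x \<noteq> 0"
  proof
    assume "cos x = 0"
    then obtain i where i: "odd i" "x = of_int i * (pi/2)" using cos_zero_iff_int by blast
    then have "pi * (real_of_int h * (2 * real n + 1)) = pi * (of_int i * real_of_int k)"
      using assms unfolding x_def by (simp add: field_simps)
    then have "real_of_int h * (2 * real n + 1) = of_int i * real_of_int k"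
      using pi_gt_zero by (metis mult_cancel_left pi_neq_zero)
    then have "real_of_int (h * (2 * int n + 1)) = real_of_int (i * k)" by simp
    then have "h * (2 * int n + 1) = i * k" by (simp only: of_int_eq_iff)
    moreover have "even (h * (2 * int n + 1)) \<longleftrightarrow> even h" by simp
    moreover have "even (i * k) \<longleftrightarrow> even k" using i by simp
    ultimately show False using assms by simp
  qed
  have rN: "real N = real_of_int k - 1" using kN by (metis of_int_1 of_int_diff of_int_of_nat_eq)
  have "(2 * real N + 1) * x = of_int (h * (2 * int n + 1)) * pi - x"
    using assms unfolding x_def rN by (simp add: field_simps)
  then have "sin ((2 * real N + 1) * x) = - sg (h * (2 * int n + 1)) * sin x"
    by (simp only: sin_diff sin_int_pi cos_int_pi mult_zero_left diff_0 mult_minus_left)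
  moreover have "sg (h * (2 * int n + 1)) = sg h" by (simp add: sg_def)
  moreover have "sg (int N) * sg h = 1"
  proof -
    have "even (int N) \<longleftrightarrow> odd k" unfolding kN[symmetric] by simp
    moreover have "even h \<longleftrightarrow> odd k" using assms(2) by simp
    ultimately show ?thesis unfolding sg_def by auto
  qed
  then have "sg (int N) * (sg h * sin x) = sin x" by (simp add: mult.assoc[symmetric])
  ultimately have "2 * cos x * (\<Sum>j\<in>{1..N}. sg (int j + 1) * sin (2 * real j * x)) = 2 * sin x"
    using tan_tel[of x N] by (simp add: mult.assoc[symmetric])
  then have t: "tan x = (\<Sum>j\<in>{1..N}. sg (int j + 1) * sin (2 * real j * x))"
    using cx unfolding tan_def by (simp add: field_simps)
  have "2 * real j * x = (2 * real n + 1) * (pi * of_int (int j * h) / of_int k)" for j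
    unfolding x_def using assms by (simp add: field_simps)
  then show ?thesis using t unfolding x_def[symmetric] kN sum_int_nat by simp
qed

lemma not_dvd:
  fixes h k j :: int
  assumes "coprime h k" "1 \<le> j" "j \<le> k - 1"
  shows "\<not> k dvd (j * h)"
proof
  assume "k dvd j * h"
  then have "k dvd j" using assms(1) by (simp add: coprime_commute coprime_dvd_mult_left_iff)
  then show False using assms(2,3) using zdvd_imp_le by fastforce
qed

lemma comb:
  fixes h k :: int
  assumes "coprime h k" "k > 0" "odd (h + k)"
  defines "q \<equiv> \<lambda>j. h * j div k"
  defines "e \<equiv> \<lambda>j. (if even (j + q j) then 1 else -1 :: int)"
  shows "2 * (\<Sum>j\<in>{1..k-1}. e j * q j) = (h - 1) * (\<Sum>j\<in>{1..k-1}. e j)"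
proof -
  have refl: "q (k - j) = h - 1 - q j" "e (k - j) = e j" if j: "j \<in> {1..k-1}" for j
  proof -
    have nd: "\<not> k dvd h * j" using not_dvd[OF assms(1), of j] j by (simp add: mult.commute)
    have "h * (k - j) = - (h * j) + h * k" by (simp add: algebra_simps)
    moreover have "(- (h * j) + h * k) div k = (- (h * j)) div k + h"
    proof -
      have "k \<noteq> 0" using assms(2) by simp
      from div_mult_self1[OF this, of "- (h * j)" h] show ?thesis by (simp only: add.commute)
    qed
    ultimately have "q (k - j) = (- (h * j)) div k + h" unfolding q_def by simp
    also have "(- (h * j)) div k = - q j - 1" unfolding q_def using nd assms(2)
      by (simp add: zdiv_zminus1_eq_if dvd_eq_mod_eq_0)
    finally show q1: "q (k - j) = h - 1 - q j" by simp
    have "even (k - j + q (k - j)) \<longleftrightarrow> even (j + q j)"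
    proof -
      have "k - j + q (k - j) = (h + k - 1) - (j + q j)" unfolding q1 by simp
      moreover have "even (h + k - 1)" using assms(3) by simp
      ultimately show ?thesis by (cases "even k"; cases "even j"; simp)
    qed
    then show "e (k - j) = e j" unfolding e_def by simp
  qed
  have bij: "(\<Sum>j\<in>{1..k-1}. e j * q j) = (\<Sum>j\<in>{1..k-1}. e (k - j) * q (k - j))"
    by (rule sum.reindex_bij_witness[of _ "\<lambda>j. k - j" "\<lambda>j. k - j"]) auto
  also have "\<dots> = (\<Sum>j\<in>{1..k-1}. e j * (h - 1 - q j))"
    by (intro sum.cong) (auto simp: refl)
  finally have "(\<Sum>j\<in>{1..k-1}. e j * q j) = (\<Sum>j\<in>{1..k-1}. e j * (h - 1)) - (\<Sum>j\<in>{1..k-1}. e j * q j)"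
    by (simp only: right_diff_distrib sum_subtractf)
  moreover have "(\<Sum>j\<in>{1..k-1}. e j * (h - 1)) = (h - 1) * (\<Sum>j\<in>{1..k-1}. e j)"
    by (simp only: sum_distrib_right[symmetric] mult.commute)
  ultimately show ?thesis by linarith
qed

theorem theorem21:
  fixes h k :: int
  assumes "coprime h k" and "k > 0" and "odd (h + k)"
  shows "summable (\<lambda>n::nat. tan (pi * real_of_int h * (2 * real n + 1) / (2 * real_of_int k))
                             / (2 * real n + 1))
    \<and> real_of_int (B1 h k) =
        2 * (1 - real_of_int h) / pi *
        (\<Sum>n. tan (pi * real_of_int h * (2 * real n + 1) / (2 * real_of_int k)) / (2 * real n + 1))"
proof -
  define V where "V = (\<Sum>j\<in>{1..k-1}. sg (j + 1) * (pi / 4 * sg (j * h div k)))"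
  have s: "(\<lambda>n::nat. tan (pi * real_of_int h * (2 * real n + 1) / (2 * real_of_int k))
                             / (2 * real n + 1)) sums V"
  proof -
    have "(\<lambda>n::nat. \<Sum>j\<in>{1..k-1}. sg (j + 1) * (sin ((2 * real n + 1) * (pi * of_int (j * h) / of_int k)) / (2 * real n + 1))) sums V"
      unfolding V_def
      by (intro sums_sum sums_mult sq_wave_gen assms(2) not_dvd[OF assms(1)]) auto
    moreover have "tan (pi * real_of_int h * (2 * real n + 1) / (2 * real_of_int k)) / (2 * real n + 1) =
       (\<Sum>j\<in>{1..k-1}. sg (j + 1) * (sin ((2 * real n + 1) * (pi * of_int (j * h) / of_int k)) / (2 * real n + 1)))" for n :: nat
      unfolding tan_exp[OF assms(2,3)] sum_divide_distrib by simp
    ultimately show ?thesis by simp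
  qed
  define q where "q \<equiv> \<lambda>j. h * j div k"
  define e where "e \<equiv> \<lambda>j. (if even (j + q j) then 1 else -1 :: int)"
  have B: "B1 h k = (\<Sum>j\<in>{1..k-1}. e j * q j)"
  proof -
    have fl: "\<lfloor>real_of_int (h * j) / real_of_int k\<rfloor> = h * j div k" for j
      by (rule floor_divide_of_int_eq)
    show ?thesis unfolding B1_def e_def q_def Let_def fl by simp
  qed
  have C: "2 * (\<Sum>j\<in>{1..k-1}. e j * q j) = (h - 1) * (\<Sum>j\<in>{1..k-1}. e j)"
    using comb[OF assms] unfolding e_def q_def by simp
  have ee: "sg (j + 1) * sg (j * h div k) = - real_of_int (e j)" for j
    unfolding sg_def e_def q_def by (auto simp: mult.commute)
  have "V = pi / 4 * (\<Sum>j\<in>{1..k-1}. sg (j + 1) * sg (j * h div k))"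
    unfolding V_def sum_distrib_left by (intro sum.cong) auto
  also have "\<dots> = - pi / 4 * real_of_int (\<Sum>j\<in>{1..k-1}. e j)"
    unfolding ee by (simp add: sum_negf)
  finally have V: "V = - pi / 4 * real_of_int (\<Sum>j\<in>{1..k-1}. e j)" .
  have "real_of_int (B1 h k) = 2 * (1 - real_of_int h) / pi * V"
  proof -
    have "2 * real_of_int (B1 h k) = (real_of_int h - 1) * real_of_int (\<Sum>j\<in>{1..k-1}. e j)"
      using arg_cong[OF C, of real_of_int] unfolding B by simp
    moreover have "2 * (1 - real_of_int h) / pi * (- pi / 4 * real_of_int (\<Sum>j\<in>{1..k-1}. e j))
      = (real_of_int h - 1) * real_of_int (\<Sum>j\<in>{1..k-1}. e j) / 2" by (simp add: field_simps)
    ultimately show ?thesis unfolding V by linarith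
  qed
  then show ?thesis using s sums_unique[OF s] sums_summable[OF s] by simp
qed
end
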